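(* Let $\Theta=\{\theta_1,\dots,\theta_N\}$ be a finite set of $N\ge 1$ distinct elements, and let $PES(\Theta)=\{A_{ij} : i=0,\dots,N;\ j=1,\dots,P(N,i)\}$ be its permutation event space, where $P(N,i)=\frac{N!}{(N-i)!}$. For $i\ge 0$ let $F(i)=\sum_{k=0}^{i}P(i,k)=\sum_{k=0}^{i}\frac{i!}{(i-k)!}$. For a permutation mass function $\mathscr{M}$ on $PES(\Theta)$ define $$H_{RPS}(\mathscr{M})=-\sum_{i=1}^{N}\sum_{j=1}^{P(N,i)}\mathscr{M}(A_{ij})\log\left(\frac{\mathscr{M}(A_{ij})}{F(i)-1}\right).$$ Then the maximum of $H_{RPS}(\mathscr{M})$ over all permutation mass functions $\mathscr{M}$ on $PES(\Theta)$ equals $$H_{\max\text{-}RPS}=\log\left(\sum_{i=1}^{N}P(N,i)\,(F(i)-1)\right).$$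
   Context: The permutation event space $PES(\Theta)$ is the set of all ordered tuples of distinct elements of $\Theta$ (including the empty tuple $\emptyset=A_{01}$): for each $i\in\{0,\dots,N\}$, the tuples of length $i$ are enumerated as $A_{i1},\dots,A_{i,P(N,i)}$. A permutation mass function (PMF) is a map $\mathscr{M}:PES(\Theta)\to[0,1]$ with $\mathscr{M}(\emptyset)=0$ and $\sum_{A\in PES(\Theta)}\mathscr{M}(A)=1$. The logarithm has a fixed base $b>1$, and the convention $0\log 0=0$ is used. *)

theory Defs
  imports Complex_Main
begin

definition perm_count :: "nat \<Rightarrow> nat \<Rightarrow> nat" where
  "perm_count N i = fact N div fact (N - i)"

definition F_rps :: "nat \<Rightarrow> nat" where
  "F_rps i = (\<Sum>k = 0..i. perm_count i k)"

definition PES :: "'a set \<Rightarrow> 'a list set" where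
  "PES \<Theta> = {xs. distinct xs \<and> set xs \<subseteq> \<Theta>}"

definition is_PMF :: "'a set \<Rightarrow> ('a list \<Rightarrow> real) \<Rightarrow> bool" where
  "is_PMF \<Theta> M \<longleftrightarrow> M [] = 0 \<and> (\<forall>A\<in>PES \<Theta>. 0 \<le> M A \<and> M A \<le> 1)
     \<and> (\<Sum>A\<in>PES \<Theta>. M A) = 1"

text \<open>Entropy of random permutation sets, log base b. Note log b 0 = 0 in Isabelle,
  so 0 log 0 = 0 holds.\<close>
definition H_RPS :: "real \<Rightarrow> 'a set \<Rightarrow> ('a list \<Rightarrow> real) \<Rightarrow> real" where
  "H_RPS b \<Theta> M = - (\<Sum>A\<in>PES \<Theta> - {[]}.
      M A * log b (M A / (real (F_rps (length A)) - 1)))"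

end

theory Submission
  imports Defs
begin

lemma PES_length_le:
  assumes "finite T" "A \<in> PES T" shows "length A \<le> card T"
proof -
  have d: "distinct A" "set A \<subseteq> T" using assms(2) by (auto simp: PES_def)
  have "length A = card (set A)" using distinct_card[OF d(1)] by simp
  also have "\<dots> \<le> card T" using card_mono[OF assms(1) d(2)] .
  finally show ?thesis .
qed

lemma PES_finite:
  assumes "finite T" shows "finite (PES T)"
proof -
  have "PES T \<subseteq> {xs. set xs \<subseteq> T \<and> length xs \<le> card T}"
  proof
    fix xs assume "xs \<in> PES T"
    thus "xs \<in> {xs. set xs \<subseteq> T \<and> length xs \<le> card T}"
      using PES_length_le[OF assms] by (auto simp: PES_def)
  qed
  thus ?thesis using finite_lists_length_le[OF assms] by (rule finite_subset)
qed

lemma card_level: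
  assumes "finite T" "i \<le> card T"
  shows "card {A\<in>PES T. length A = i} = perm_count (card T) i"
proof -
  have "{A\<in>PES T. length A = i} = {xs. length xs = i \<and> distinct xs \<and> set xs \<subseteq> T}"
    unfolding PES_def by auto
  moreover have "perm_count (card T) i = \<Prod>{card T - i + 1 .. card T}"
    unfolding perm_count_def using assms(2) by (simp add: fact_div_fact)
  ultimately show ?thesis using card_lists_distinct_length_eq[OF assms] by simp
qed

lemma F_ge2: "i \<ge> 1 \<Longrightarrow> F_rps i \<ge> 2"
proof -
  assume "i \<ge> 1"
  have "F_rps i \<ge> (\<Sum>k\<in>{0,1}. perm_count i k)"
    unfolding F_rps_def using \<open>i \<ge> 1\<close> by (intro sum_mono2) auto
  moreover have "perm_count i 0 = 1" unfolding perm_count_def by simp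
  moreover have "perm_count i 1 = i" unfolding perm_count_def using \<open>i \<ge> 1\<close>
  proof -
    have "(fact i :: nat) = i * fact (i - 1)" using \<open>i \<ge> 1\<close> by (simp add: fact_reduce)
    thus "fact i div fact (i - 1) = i" by simp
  qed
  ultimately show ?thesis using \<open>i \<ge> 1\<close> by simp
qed

theorem theorem4:
  fixes \<Theta> :: "'a set" and N :: nat and b :: real
  assumes "finite \<Theta>" and "card \<Theta> = N" and "N \<ge> 1" and "b > 1"
  shows "(\<exists>M. is_PMF \<Theta> M \<and>
            H_RPS b \<Theta> M = log b (\<Sum>i = 1..N. real (perm_count N i) * (real (F_rps i) - 1)))
       \<and> (\<forall>M. is_PMF \<Theta> M \<longrightarrow>
            H_RPS b \<Theta> M \<le> log b (\<Sum>i = 1..N. real (perm_count N i) * (real (F_rps i) - 1)))"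
proof -
  define S where "S = PES \<Theta> - {[]}"
  define w where "w = (\<lambda>A::'a list. real (F_rps (length A)) - 1)"
  define Z where "Z = (\<Sum>i = 1..N. real (perm_count N i) * (real (F_rps i) - 1))"
  have finS: "finite S" unfolding S_def using PES_finite[OF assms(1)] by simp
  have wpos: "w A \<ge> 1" if "A \<in> S" for A
  proof -
    have "length A \<ge> 1" using that unfolding S_def by (cases A) auto
    thus ?thesis using F_ge2 unfolding w_def by force
  qed
  have wnn: "w A \<ge> 0" if "A \<in> S" for A using wpos[OF that] by linarith
  have S_eq: "S = (\<Union>i\<in>{1..N}. {A\<in>PES \<Theta>. length A = i})"
    unfolding S_def using PES_length_le[OF assms(1)] assms(2)
    by (auto simp: Suc_le_eq)
  have "(\<Sum>A\<in>S. w A) = (\<Sum>i\<in>{1..N}. \<Sum>A\<in>{A\<in>PES \<Theta>. length A = i}. w A)"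
    unfolding S_eq
    by (rule sum.UNION_disjoint) (use PES_finite[OF assms(1)] in auto)
  also have "\<dots> = Z" unfolding Z_def
  proof (rule sum.cong)
    fix i assume i: "i \<in> {1..N}"
    have "(\<Sum>A\<in>{A\<in>PES \<Theta>. length A = i}. w A)
        = (\<Sum>A\<in>{A\<in>PES \<Theta>. length A = i}. real (F_rps i) - 1)"
      unfolding w_def by (rule sum.cong) auto
    also have "\<dots> = real (perm_count N i) * (real (F_rps i) - 1)"
      using card_level[OF assms(1), of i] i assms(2) by simp
    finally show "(\<Sum>A\<in>{A\<in>PES \<Theta>. length A = i}. w A) = real (perm_count N i) * (real (F_rps i) - 1)" .
  qed simp
  finally have Zsum: "(\<Sum>A\<in>S. w A) = Z" .
  have "S \<noteq> {}"
  proof -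
    obtain x where "x \<in> \<Theta>" using assms(2,3) by fastforce
    hence "[x] \<in> S" unfolding S_def PES_def by auto
    thus ?thesis by auto
  qed
  then obtain A0 where "A0 \<in> S" by auto
  have Zpos: "Z \<ge> 1"
  proof -
    have "w A0 \<le> (\<Sum>A\<in>S. w A)"
      using finS \<open>A0 \<in> S\<close> wpos by (intro member_le_sum) (use wnn in auto)
    thus ?thesis using wpos[OF \<open>A0 \<in> S\<close>] Zsum by simp
  qed
  have Hdef: "H_RPS b \<Theta> M = - (\<Sum>A\<in>S. M A * log b (M A / w A))" for M
    unfolding H_RPS_def S_def w_def by simp
  have sumS: "(\<Sum>A\<in>S. M A) = 1" if "is_PMF \<Theta> M" for M
  proof -
    have "[] \<in> PES \<Theta>" unfolding PES_def by simp
    hence "(\<Sum>A\<in>PES \<Theta>. M A) = M [] + (\<Sum>A\<in>S. M A)"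
      unfolding S_def by (rule sum.remove[OF PES_finite[OF assms(1)]])
    thus ?thesis using that unfolding is_PMF_def by simp
  qed
  have lnb: "ln b > 0" using assms(4) by simp
  define M0 where "M0 = (\<lambda>A. if A \<in> S then w A / Z else 0)"
  have pmf0: "is_PMF \<Theta> M0"
  proof -
    have "M0 [] = 0" unfolding M0_def S_def by simp
    moreover have "\<forall>A\<in>PES \<Theta>. 0 \<le> M0 A \<and> M0 A \<le> 1"
    proof
      fix A assume "A \<in> PES \<Theta>"
      show "0 \<le> M0 A \<and> M0 A \<le> 1"
      proof (cases "A \<in> S")
        case True
        have "w A \<le> (\<Sum>A\<in>S. w A)"
          using finS True wpos by (intro member_le_sum) (use wnn in auto)
        thus ?thesis using True wpos[OF True] Zsum Zpos unfolding M0_def by simp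
      qed (simp add: M0_def)
    qed
    moreover have "(\<Sum>A\<in>PES \<Theta>. M0 A) = 1"
    proof -
      have "(\<Sum>A\<in>PES \<Theta>. M0 A) = (\<Sum>A\<in>S. M0 A)"
        unfolding M0_def by (rule sum.mono_neutral_right) (use PES_finite[OF assms(1)] S_def in auto)
      also have "\<dots> = (\<Sum>A\<in>S. w A / Z)" unfolding M0_def by simp
      also have "\<dots> = 1" using Zsum Zpos by (simp add: sum_divide_distrib[symmetric])
      finally show ?thesis .
    qed
    ultimately show ?thesis unfolding is_PMF_def by blast
  qed
  have "H_RPS b \<Theta> M0 = - (\<Sum>A\<in>S. M0 A * log b (1 / Z))"
    unfolding Hdef
  proof -
    have "(\<Sum>A\<in>S. M0 A * log b (M0 A / w A)) = (\<Sum>A\<in>S. M0 A * log b (1 / Z))"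
    proof (rule sum.cong)
      fix A assume "A \<in> S"
      thus "M0 A * log b (M0 A / w A) = M0 A * log b (1 / Z)"
        using wpos[OF \<open>A \<in> S\<close>] unfolding M0_def by simp
    qed simp
    thus "- (\<Sum>A\<in>S. M0 A * log b (M0 A / w A)) = - (\<Sum>A\<in>S. M0 A * log b (1 / Z))" by simp
  qed
  also have "\<dots> = - (log b (1/Z) * (\<Sum>A\<in>S. M0 A))"
    by (simp add: sum_distrib_right mult.commute)
  also have "\<dots> = log b Z" using sumS[OF pmf0] Zpos assms(4) by (simp add: log_divide)
  finally have part1: "H_RPS b \<Theta> M0 = log b Z" .
  have part2: "H_RPS b \<Theta> M \<le> log b Z" if pm: "is_PMF \<Theta> M" for M
  proof -
    have key: "- (M A * log b (M A / w A)) - M A * log b Z \<le> (w A / Z - M A) / ln b"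
      if "A \<in> S" for A
    proof -
      have M0: "M A \<ge> 0" using pm that unfolding is_PMF_def S_def by auto
      have wA: "w A \<ge> 1" using wpos[OF that] .
      show ?thesis
      proof (cases "M A = 0")
        case True
        thus ?thesis using wA Zpos lnb by simp
      next
        case False
        hence Mp: "M A > 0" using M0 by simp
        have "- (M A * log b (M A / w A)) - M A * log b Z
              = M A * (ln (w A / (M A * Z)) / ln b)"
          using Mp wA Zpos lnb by (simp add: log_def ln_div ln_mult) (simp add: field_simps)
        also have "\<dots> \<le> M A * ((w A / (M A * Z) - 1) / ln b)"
          using Mp wA Zpos lnb
          by (intro mult_left_mono divide_right_mono ln_le_minus_one) auto
        also have "\<dots> = (w A / Z - M A) / ln b"
          using Mp Zpos lnb by (simp add: field_simps)
        finally show ?thesis .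
      qed
    qed
    have "H_RPS b \<Theta> M - log b Z = (\<Sum>A\<in>S. - (M A * log b (M A / w A)) - M A * log b Z)"
      unfolding Hdef using sumS[OF pm]
      by (simp add: sum_subtractf sum_distrib_right[symmetric] sum_negf)
    also have "\<dots> \<le> (\<Sum>A\<in>S. (w A / Z - M A) / ln b)"
      using key by (rule sum_mono)
    also have "\<dots> = ((\<Sum>A\<in>S. w A) / Z - (\<Sum>A\<in>S. M A)) / ln b"
      by (simp add: sum_divide_distrib[symmetric] sum_subtractf)
    also have "\<dots> = 0" using Zsum Zpos sumS[OF pm] by simp
    finally show ?thesis by simp
  qed
  show ?thesis unfolding Z_def[symmetric] using pmf0 part1 part2 by blast
qed

end
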